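(* Let $G=(X,\Sigma,\longrightarrow,X_0)$ and $R=(Z,\Sigma,\longrightarrow,Z_0)$ be automata. If $\Phi$ is a $\Sigma_{ucr}$-simulation from $G$ to $R$ that is uniform w.r.t. $\Sigma_r$, then there exists a $\Sigma_{ucr}$-controllability set from $G$ to $R$.
   Context: An automaton is a 4-tuple $A=(Q,\Sigma,\longrightarrow,Q_0)$ with state set $Q$, finite event set $\Sigma$, ${\longrightarrow}\subseteq Q\times\Sigma\times Q$ and $\emptyset\neq Q_0\subseteq Q$; write $q\xrightarrow{\sigma}q'$ for $(q,\sigma,q')\in{\longrightarrow}$, $q\xrightarrow{\sigma}$ if some such $q'$ exists, extended to strings. A state $q$ is $s$-reachable ($s\in\Sigma^*$) if $q_0\xrightarrow{s}q$ for some initial $q_0$. Events are partitioned into uncontrollable $\Sigma_{uc}$ and controllable $\Sigma_c$; $\Sigma_r\subseteq\Sigma$ is a fixed set of required events. $\Phi\subseteq X\times Z$ is a $\Sigma_{ucr}$-simulation from $G$ to $R$ if (initial state) every $x_0\in X_0$ has $z_0\in Z_0$ with $(x_0,z_0)\in\Phi$; ($\Sigma_{uc}$-forward) for $(x,z)\in\Phi$, $\sigma\in\Sigma_{uc}$, $x\xrightarrow{\sigma}x'$ there is $z'$ with $z\xrightarrow{\sigma}z'$, $(x',z')\in\Phi$; ($\Sigma_r$-backward) for $(x,z)\in\Phi$, $\sigma\in\Sigma_r$, $z\xrightarrow{\sigma}z'$ there is $x'$ with $x\xrightarrow{\sigma}x'$, $(x',z')\in\Phi$. Such $\Phi$ is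 uniform w.r.t. $\Sigma_r$ if for any $(x_1,z_1),(x_2,z_2)\in\Phi$ such that, for some $s\in\Sigma^*$, $x_1,x_2$ are $s$-reachable in $G$ and $z_1,z_2$ are $s$-reachable in $R$: for all $\sigma\in\Sigma_r$ and $x_2'$, if $z_1\xrightarrow{\sigma}$ and $x_2\xrightarrow{\sigma}x_2'$ then there is $z_2'$ with $z_2\xrightarrow{\sigma}z_2'$ and $(x_2',z_2')\in\Phi$. For $W,W'\subseteq X\times Z$: $\mathit{match}_{G,R}(W,\sigma,W')$ iff for all $(x,z)\in W$ and $x\xrightarrow{\sigma}x'$ there is $z'$ with $z\xrightarrow{\sigma}z'$ and $(x',z')\in W'$. $E\subseteq\wp(X\times Z)$ is a $\Sigma_{ucr}$-controllability set from $G$ to $R$ if: (istate) some $W_0\in E$ satisfies $\forall x_0\in X_0\,\exists z_0\in Z_0\,((x_0,z_0)\in W_0)$; (a) for every $W\in E$, $\sigma\in\Sigma_{uc}$ there is $W'\in E$ with $\mathit{match}_{G,R}(W,\sigma,W')$; (b) for every $W\in E$, $(x,z)\in W$, $\sigma\in\Sigma_r$, $z\xrightarrow{\sigma}z'$, there exist $x'$, $W'\in E$ with $x\xrightarrow{\sigma}x'$, $(x',z')\in W'$, $\mathit{match}_{G,R}(W,\sigma,W')$. *)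

theory Defs
  imports Main
begin

record ('q, 'e) automaton =
  states :: "'q set"
  events :: "'e set"
  trans  :: "('q \<times> 'e \<times> 'q) set"
  init   :: "'q set"

definition is_automaton :: "('q, 'e) automaton \<Rightarrow> bool" where
  "is_automaton A \<longleftrightarrow> finite (events A) \<and>
     trans A \<subseteq> states A \<times> events A \<times> states A \<and>
     init A \<subseteq> states A \<and> init A \<noteq> {}"

fun steps :: "('q, 'e) automaton \<Rightarrow> 'q \<Rightarrow> 'e list \<Rightarrow> 'q \<Rightarrow> bool" where
  "steps A q [] q' \<longleftrightarrow> q' = q"
| "steps A q (e # s) q' \<longleftrightarrow> (\<exists>q''. (q, e, q'') \<in> trans A \<and> steps A q'' s q')"

definition reachable_by :: "('q, 'e) automaton \<Rightarrow> 'e list \<Rightarrow> 'q \<Rightarrow> bool" where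
  "reachable_by A s q \<longleftrightarrow> (\<exists>q0 \<in> init A. steps A q0 s q)"

definition enabled :: "('q, 'e) automaton \<Rightarrow> 'q \<Rightarrow> 'e \<Rightarrow> bool" where
  "enabled A q \<sigma> \<longleftrightarrow> (\<exists>q'. (q, \<sigma>, q') \<in> trans A)"

definition ucr_simulation ::
  "'e set \<Rightarrow> 'e set \<Rightarrow> ('x, 'e) automaton \<Rightarrow> ('z, 'e) automaton \<Rightarrow> ('x \<times> 'z) set \<Rightarrow> bool" where
  "ucr_simulation Sigma_uc Sigma_r G R \<Phi> \<longleftrightarrow>
     \<Phi> \<subseteq> states G \<times> states R \<and>
     (\<forall>x0 \<in> init G. \<exists>z0 \<in> init R. (x0, z0) \<in> \<Phi>) \<and>
     (\<forall>x z \<sigma> x'. (x, z) \<in> \<Phi> \<and> \<sigma> \<in> Sigma_uc \<and> (x, \<sigma>, x') \<in> trans G \<longrightarrow>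
        (\<exists>z'. (z, \<sigma>, z') \<in> trans R \<and> (x', z') \<in> \<Phi>)) \<and>
     (\<forall>x z \<sigma> z'. (x, z) \<in> \<Phi> \<and> \<sigma> \<in> Sigma_r \<and> (z, \<sigma>, z') \<in> trans R \<longrightarrow>
        (\<exists>x'. (x, \<sigma>, x') \<in> trans G \<and> (x', z') \<in> \<Phi>))"

definition uniform_sim ::
  "'e set \<Rightarrow> ('x, 'e) automaton \<Rightarrow> ('z, 'e) automaton \<Rightarrow> ('x \<times> 'z) set \<Rightarrow> bool" where
  "uniform_sim Sigma_r G R \<Phi> \<longleftrightarrow>
     (\<forall>x1 z1 x2 z2. (x1, z1) \<in> \<Phi> \<and> (x2, z2) \<in> \<Phi> \<and>
        (\<exists>s \<in> lists (events G). reachable_by G s x1 \<and> reachable_by G s x2 \<and>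
                                reachable_by R s z1 \<and> reachable_by R s z2) \<longrightarrow>
        (\<forall>\<sigma> \<in> Sigma_r. \<forall>x2'. enabled R z1 \<sigma> \<and> (x2, \<sigma>, x2') \<in> trans G \<longrightarrow>
           (\<exists>z2'. (z2, \<sigma>, z2') \<in> trans R \<and> (x2', z2') \<in> \<Phi>)))"

definition match ::
  "('x, 'e) automaton \<Rightarrow> ('z, 'e) automaton \<Rightarrow> ('x \<times> 'z) set \<Rightarrow> 'e \<Rightarrow> ('x \<times> 'z) set \<Rightarrow> bool" where
  "match G R W \<sigma> W' \<longleftrightarrow>
     (\<forall>(x, z) \<in> W. \<forall>x'. (x, \<sigma>, x') \<in> trans G \<longrightarrow>
        (\<exists>z'. (z, \<sigma>, z') \<in> trans R \<and> (x', z') \<in> W'))"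

definition ucr_controllability_set ::
  "'e set \<Rightarrow> 'e set \<Rightarrow> ('x, 'e) automaton \<Rightarrow> ('z, 'e) automaton \<Rightarrow> ('x \<times> 'z) set set \<Rightarrow> bool" where
  "ucr_controllability_set Sigma_uc Sigma_r G R E \<longleftrightarrow>
     E \<subseteq> Pow (states G \<times> states R) \<and>
     (\<exists>W0 \<in> E. \<forall>x0 \<in> init G. \<exists>z0 \<in> init R. (x0, z0) \<in> W0) \<and>
     (\<forall>W \<in> E. \<forall>\<sigma> \<in> Sigma_uc. \<exists>W' \<in> E. match G R W \<sigma> W') \<and>
     (\<forall>W \<in> E. \<forall>(x, z) \<in> W. \<forall>\<sigma> \<in> Sigma_r. \<forall>z'. (z, \<sigma>, z') \<in> trans R \<longrightarrow>
        (\<exists>x' W'. (x, \<sigma>, x') \<in> trans G \<and> W' \<in> E \<and> (x', z') \<in> W' \<and> match G R W \<sigma> W'))"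

end

theory Submission
  imports Defs
begin

lemma steps_snoc: "steps A q s q1 \<Longrightarrow> (q1, e, q2) \<in> trans A \<Longrightarrow> steps A q (s @ [e]) q2"
  by (induction s arbitrary: q) auto

lemma reach_snoc: "reachable_by A s q1 \<Longrightarrow> (q1, e, q2) \<in> trans A \<Longrightarrow> reachable_by A (s @ [e]) q2"
  proof -
  assume a: "reachable_by A s q1" and b: "(q1, e, q2) \<in> trans A"
  from a obtain q0 where "q0 \<in> init A" "steps A q0 s q1" unfolding reachable_by_def by blast
  moreover have "steps A q0 (s @ [e]) q2" using steps_snoc[OF \<open>steps A q0 s q1\<close> b] .
  ultimately show ?thesis unfolding reachable_by_def by blast
qed

theorem lemma5:
  fixes G :: "('x, 'e) automaton" and R :: "('z, 'e) automaton"
    and Sigma_uc Sigma_c Sigma_r :: "'e set" and \<Phi> :: "('x \<times> 'z) set"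
  assumes "is_automaton G" and "is_automaton R"
    and "events G = events R"
    and "Sigma_uc \<union> Sigma_c = events G" and "Sigma_uc \<inter> Sigma_c = {}"
    and "Sigma_r \<subseteq> events G"
    and "ucr_simulation Sigma_uc Sigma_r G R \<Phi>"
    and "uniform_sim Sigma_r G R \<Phi>"
  shows "\<exists>E. ucr_controllability_set Sigma_uc Sigma_r G R E"
proof -
  define Wf where "Wf s = {(x, z). (x, z) \<in> \<Phi> \<and> reachable_by G s x \<and> reachable_by R s z}" for s
  define E where "E = Wf ` lists (events G)"
  note sim = assms(7)[unfolded ucr_simulation_def]
  note uni = assms(8)[unfolded uniform_sim_def]
  have c1: "E \<subseteq> Pow (states G \<times> states R)"
    using sim unfolding E_def Wf_def by auto
  have c2: "\<exists>W0 \<in> E. \<forall>x0 \<in> init G. \<exists>z0 \<in> init R. (x0, z0) \<in> W0"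
  proof
    show "Wf [] \<in> E" unfolding E_def by auto
    show "\<forall>x0 \<in> init G. \<exists>z0 \<in> init R. (x0, z0) \<in> Wf []"
      using sim unfolding Wf_def reachable_by_def by fastforce
  qed
  have c3: "\<forall>W \<in> E. \<forall>\<sigma> \<in> Sigma_uc. \<exists>W' \<in> E. match G R W \<sigma> W'"
  proof (intro ballI)
    fix W \<sigma> assume W: "W \<in> E" and su: "\<sigma> \<in> Sigma_uc"
    have se: "\<sigma> \<in> events G" using su assms(4) by blast
    from W obtain s where s1: "s \<in> lists (events G)" and Ws: "W = Wf s" unfolding E_def by auto
    have "Wf (s @ [\<sigma>]) \<in> E" unfolding E_def
      by (rule imageI) (use s1 se in simp)
    moreover have "match G R W \<sigma> (Wf (s @ [\<sigma>]))"
      unfolding match_def Ws Wf_def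
    proof (clarify)
      fix x z x' assume h: "(x, z) \<in> \<Phi>" "reachable_by G s x" "reachable_by R s z" "(x, \<sigma>, x') \<in> trans G"
      obtain z' where z': "(z, \<sigma>, z') \<in> trans R" "(x', z') \<in> \<Phi>" using sim h(1,4) su by blast
      have "reachable_by G (s @ [\<sigma>]) x'" by (rule reach_snoc[OF h(2,4)])
      moreover have "reachable_by R (s @ [\<sigma>]) z'" by (rule reach_snoc[OF h(3) z'(1)])
      ultimately show "\<exists>z'. (z, \<sigma>, z') \<in> trans R \<and> (x', z') \<in> {(x, z). (x, z) \<in> \<Phi> \<and> reachable_by G (s @ [\<sigma>]) x \<and> reachable_by R (s @ [\<sigma>]) z}"
        using z' by blast
    qed
    ultimately show "\<exists>W' \<in> E. match G R W \<sigma> W'" by blast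
  qed
  have c4: "\<forall>W \<in> E. \<forall>(x, z) \<in> W. \<forall>\<sigma> \<in> Sigma_r. \<forall>z'. (z, \<sigma>, z') \<in> trans R \<longrightarrow>
        (\<exists>x' W'. (x, \<sigma>, x') \<in> trans G \<and> W' \<in> E \<and> (x', z') \<in> W' \<and> match G R W \<sigma> W')"
  proof (intro ballI allI impI, clarify)
    fix W x z \<sigma> z' assume W: "W \<in> E" and xz: "(x, z) \<in> W" and sr: "\<sigma> \<in> Sigma_r" and zt: "(z, \<sigma>, z') \<in> trans R"
    then obtain s where s1: "s \<in> lists (events G)" and Ws: "W = Wf s" unfolding E_def by auto
    from xz Ws have xz': "(x, z) \<in> \<Phi>" "reachable_by G s x" "reachable_by R s z" unfolding Wf_def by auto
    obtain x' where x': "(x, \<sigma>, x') \<in> trans G" "(x', z') \<in> \<Phi>" using sim xz' sr zt by blast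
    have "Wf (s @ [\<sigma>]) \<in> E" unfolding E_def
      by (rule imageI) (use s1 sr assms(6) in \<open>simp add: subset_iff\<close>)
    moreover have "(x', z') \<in> Wf (s @ [\<sigma>])" unfolding Wf_def using x' xz' reach_snoc[OF xz'(2) x'(1)] reach_snoc[OF xz'(3) zt] by blast
    moreover have "match G R W \<sigma> (Wf (s @ [\<sigma>]))"
      unfolding match_def Ws Wf_def
    proof (clarify)
      fix x2 z2 x2' assume h: "(x2, z2) \<in> \<Phi>" "reachable_by G s x2" "reachable_by R s z2" "(x2, \<sigma>, x2') \<in> trans G"
      have "enabled R z \<sigma>" using zt unfolding enabled_def by blast
      then obtain z2' where "(z2, \<sigma>, z2') \<in> trans R" "(x2', z2') \<in> \<Phi>"
        using uni xz' h s1 sr by blast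
      then show "\<exists>z'. (z2, \<sigma>, z') \<in> trans R \<and> (x2', z') \<in> {(x, z). (x, z) \<in> \<Phi> \<and> reachable_by G (s @ [\<sigma>]) x \<and> reachable_by R (s @ [\<sigma>]) z}"
        using h reach_snoc[OF h(2) h(4)] reach_snoc[OF h(3)] by blast
    qed
    ultimately show "\<exists>x' W'. (x, \<sigma>, x') \<in> trans G \<and> W' \<in> E \<and> (x', z') \<in> W' \<and> match G R W \<sigma> W'"
      using x' by blast
  qed
  show ?thesis unfolding ucr_controllability_set_def using c1 c2 c3 c4 by blast
qed

end
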